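(* Let $\mathbb{K}$ be a field of characteristic $0$, $\alpha\in\mathbb{K}$, $A=A(\alpha,0,1)$ and $\omega=du-\alpha ud-1\in A$. For $p\in\langle\omega\rangle$ let $[p]$ denote its class in the $A$-bimodule $\langle\omega\rangle/\langle\omega\rangle^2$. Then $\{[u^i\omega d^l]: i,l\ge0\}$ is a $\mathbb{K}$-linear basis of $\langle\omega\rangle/\langle\omega\rangle^2$. Moreover, if $\alpha\neq1$, then for all $i,l\ge0$ $$[u^i\omega d^lu]=\frac{\alpha^l-1}{\alpha-1}[u^i\omega d^{l-1}],\qquad [du^i\omega d^l]=\frac{\alpha^i-1}{\alpha-1}[u^{i-1}\omega d^l],$$ where the right-hand sides are interpreted as $0$ when $l=0$ (first formula) or $i=0$ (second formula).
   Context: For $(\alpha,\beta,\gamma)\in\mathbb{K}^3$, the down-up algebra $A(\alpha,\beta,\gamma)$ is the quotient of $\mathbb{K}\langle d,u\rangle$ by the two-sided ideal generated by $d^2u-(\alpha dud+\beta ud^2+\gamma d)$ and $du^2-(\alpha udu+\beta u^2d+\gamma u)$. $\langle\omega\rangle$ is the two-sided ideal generated by $\omega$. *)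

theory Defs
  imports Main
begin

text \<open>The free algebra K<d,u> is modelled as finitely supported functions from
words over the alphabet {d,u} to K; a word is a bool list with True = d and
False = u.\<close>

type_synonym 'k fa = "bool list \<Rightarrow> 'k"

definition fa_carrier :: "('k::zero) fa set" where
  "fa_carrier = {f. finite {w. f w \<noteq> 0}}"

definition fa_add :: "('k::plus) fa \<Rightarrow> 'k fa \<Rightarrow> 'k fa" where
  "fa_add f g = (\<lambda>w. f w + g w)"

definition fa_sub :: "('k::minus) fa \<Rightarrow> 'k fa \<Rightarrow> 'k fa" where
  "fa_sub f g = (\<lambda>w. f w - g w)"

definition fa_smult :: "'k::times \<Rightarrow> 'k fa \<Rightarrow> 'k fa" where
  "fa_smult c f = (\<lambda>w. c * f w)"

definition fa_zero :: "('k::zero) fa" where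
  "fa_zero = (\<lambda>w. 0)"

definition fa_mono :: "bool list \<Rightarrow> ('k::{zero,one}) fa" where
  "fa_mono v = (\<lambda>w. if w = v then 1 else 0)"

definition fa_one :: "('k::{zero,one}) fa" where
  "fa_one = fa_mono []"

definition fa_mult :: "('k::comm_semiring_1) fa \<Rightarrow> 'k fa \<Rightarrow> 'k fa" where
  "fa_mult f g = (\<lambda>w. \<Sum>i\<le>length w. f (take i w) * g (drop i w))"

primrec fa_pow :: "('k::comm_semiring_1) fa \<Rightarrow> nat \<Rightarrow> 'k fa" where
  "fa_pow f 0 = fa_one"
| "fa_pow f (Suc n) = fa_mult f (fa_pow f n)"

definition fa_sum :: "'i set \<Rightarrow> ('i \<Rightarrow> ('k::comm_monoid_add) fa) \<Rightarrow> 'k fa" where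
  "fa_sum S F = (\<lambda>w. \<Sum>x\<in>S. F x w)"

definition gen_d :: "('k::{zero,one}) fa" where "gen_d = fa_mono [True]"
definition gen_u :: "('k::{zero,one}) fa" where "gen_u = fa_mono [False]"

inductive_set two_sided_ideal :: "('k::comm_ring_1) fa set \<Rightarrow> 'k fa set"
  for S :: "'k fa set" where
  gen: "s \<in> S \<Longrightarrow> s \<in> fa_carrier \<Longrightarrow> s \<in> two_sided_ideal S"
| zero: "fa_zero \<in> two_sided_ideal S"
| add: "a \<in> two_sided_ideal S \<Longrightarrow> b \<in> two_sided_ideal S \<Longrightarrow> fa_add a b \<in> two_sided_ideal S"
| mult: "a \<in> two_sided_ideal S \<Longrightarrow> x \<in> fa_carrier \<Longrightarrow> y \<in> fa_carrier \<Longrightarrow>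
          fa_mult x (fa_mult a y) \<in> two_sided_ideal S"

definition downup_rels :: "'k::comm_ring_1 \<Rightarrow> 'k \<Rightarrow> 'k \<Rightarrow> 'k fa set" where
  "downup_rels \<alpha> \<beta> \<gamma> =
    { fa_sub (fa_mult gen_d (fa_mult gen_d gen_u))
        (fa_add (fa_smult \<alpha> (fa_mult gen_d (fa_mult gen_u gen_d)))
          (fa_add (fa_smult \<beta> (fa_mult gen_u (fa_mult gen_d gen_d))) (fa_smult \<gamma> gen_d))),
      fa_sub (fa_mult gen_d (fa_mult gen_u gen_u))
        (fa_add (fa_smult \<alpha> (fa_mult gen_u (fa_mult gen_d gen_u)))
          (fa_add (fa_smult \<beta> (fa_mult gen_u (fa_mult gen_u gen_d))) (fa_smult \<gamma> gen_u))) }"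

definition dua_omega :: "'k::comm_ring_1 \<Rightarrow> 'k fa" where
  "dua_omega \<alpha> = fa_sub (fa_sub (fa_mult gen_d gen_u) (fa_smult \<alpha> (fa_mult gen_u gen_d))) fa_one"

text \<open>Preimage in the free algebra of the ideal <omega> of A = A(alpha,0,1).\<close>
definition omega_ideal :: "'k::comm_ring_1 \<Rightarrow> 'k fa set" where
  "omega_ideal \<alpha> = two_sided_ideal (downup_rels \<alpha> 0 1 \<union> {dua_omega \<alpha>})"

text \<open>Preimage in the free algebra of <omega>^2 in A: generated by the defining
relations together with all products of two elements of (the preimage of) <omega>.\<close>
definition omega_sq :: "'k::comm_ring_1 \<Rightarrow> 'k fa set" where
  "omega_sq \<alpha> = two_sided_ideal (downup_rels \<alpha> 0 1 \<union>
      {fa_mult a b | a b. a \<in> omega_ideal \<alpha> \<and> b \<in> omega_ideal \<alpha>})"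

definition omega_basis :: "'k::comm_ring_1 \<Rightarrow> nat \<Rightarrow> nat \<Rightarrow> 'k fa" where
  "omega_basis \<alpha> i l = fa_mult (fa_pow gen_u i) (fa_mult (dua_omega \<alpha>) (fa_pow gen_d l))"

end

theory Submission
  imports Defs "HOL-Library.Poly_Mapping"
begin



datatype wd = W (unW: "bool list")

instantiation wd :: monoid_add
begin
definition zero_wd_def: "0 = W []"
definition plus_wd_def: "x + y = W (unW x @ unW y)"
instance by standard (auto simp: zero_wd_def plus_wd_def)
end

lemma W_plus[simp]: "W a + W b = W (a @ b)" by (simp add: plus_wd_def)
lemma W_zero_iff[simp]: "(W w = 0) = (w = [])" by (simp add: zero_wd_def)

type_synonym 'k R = "wd \<Rightarrow>\<^sub>0 'k"

definition toF :: "('k::zero) R \<Rightarrow> 'k fa" where "toF p = (\<lambda>w. Poly_Mapping.lookup p (W w))"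
definition toR :: "('k::zero) fa \<Rightarrow> 'k R" where "toR f = Abs_poly_mapping (\<lambda>x. f (unW x))"

lemma toF_carrier: "toF p \<in> fa_carrier"
proof -
  have "{w. Poly_Mapping.lookup p (W w) \<noteq> 0} \<subseteq> unW ` Poly_Mapping.keys p"
  proof
    fix w assume "w \<in> {w. Poly_Mapping.lookup p (W w) \<noteq> 0}"
    then have "W w \<in> Poly_Mapping.keys p" by (simp add: in_keys_iff)
    then show "w \<in> unW ` Poly_Mapping.keys p" by (rule rev_image_eqI) simp
  qed
  then have "finite {w. Poly_Mapping.lookup p (W w) \<noteq> 0}"
    by (rule finite_subset) simp
  then show ?thesis by (simp add: fa_carrier_def toF_def)
qed

lemma toF_toR: assumes "f \<in> fa_carrier" shows "toF (toR f) = f"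
proof -
  have "{x. f (unW x) \<noteq> 0} \<subseteq> W ` {w. f w \<noteq> 0}"
  proof
    fix x assume "x \<in> {x. f (unW x) \<noteq> 0}"
    then have "unW x \<in> {w. f w \<noteq> 0}" by simp
    then show "x \<in> W ` {w. f w \<noteq> 0}" by (rule rev_image_eqI) simp
  qed
  moreover have "finite (W ` {w. f w \<noteq> 0})"
    using assms unfolding fa_carrier_def by simp
  ultimately have "finite {x. f (unW x) \<noteq> 0}" by (rule finite_subset)
  then have "Poly_Mapping.lookup (toR f) = (\<lambda>x. f (unW x))"
    unfolding toR_def by (rule lookup_Abs_poly_mapping)
  then show ?thesis unfolding toF_def by simp
qed

lemma toR_toF[simp]: "toR (toF p) = p"
proof -
  have "(\<lambda>x. Poly_Mapping.lookup p (W (unW x))) = Poly_Mapping.lookup p" by simp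
  then show ?thesis unfolding toF_def toR_def by (simp only: lookup_inverse)
qed

lemma toF_inj: "toF p = toF q \<Longrightarrow> p = q"
  by (metis toR_toF)

lemma toF_add: "toF (p + q) = fa_add (toF p) (toF q)"
  by (simp add: toF_def fa_add_def lookup_add)
lemma toF_diff: "toF (p - (q::'k::ab_group_add R)) = fa_sub (toF p) (toF q)"
  by (simp add: toF_def fa_sub_def lookup_minus)
lemma toF_zero: "toF 0 = fa_zero"
  by (simp add: toF_def fa_zero_def)
lemma toF_one: "toF (1::'k::{zero_neq_one} R) = fa_one"
  by (auto simp: toF_def fa_one_def fa_mono_def lookup_one)

definition sc :: "'k::zero \<Rightarrow> 'k R" where "sc c = Poly_Mapping.single 0 c"

lemma toF_sc: "toF (sc c * (p::'k::comm_semiring_1 R)) = fa_smult c (toF p)"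
proof -
  have "sc c * p = Poly_Mapping.map ((*) c) p" by (simp add: sc_def mult_map_scale_conv_mult)
  then show ?thesis by (auto simp: toF_def fa_smult_def map.rep_eq when_def)
qed

lemma toF_mult: "toF (p * q) = fa_mult (toF p) (toF (q::'k::comm_semiring_1 R))"
proof (rule ext)
  fix w
  let ?f = "Poly_Mapping.lookup p" and ?g = "Poly_Mapping.lookup q"
  have "Poly_Mapping.lookup (p*q) (W w) = prod_fun ?f ?g (W w)"
    by (simp only: times_poly_mapping.rep_eq)
  also have "\<dots> = (\<Sum>(a, b). ?f a * ?g b when W w = a + b)"
    by (rule prod_fun_unfold_prod) simp_all
  also have "\<dots> = (\<Sum>ab\<in>(\<lambda>i. (W (take i w), W (drop i w))) ` {..length w}.
        (case ab of (a,b) \<Rightarrow> ?f a * ?g b when W w = a + b))"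
  proof (rule Sum_any.expand_superset)
    show "finite ((\<lambda>i. (W (take i w), W (drop i w))) ` {..length w})" by simp
    show "{ab. (case ab of (a,b) \<Rightarrow> ?f a * ?g b when W w = a + b) \<noteq> 0}
        \<subseteq> (\<lambda>i. (W (take i w), W (drop i w))) ` {..length w}"
    proof
      fix ab assume "ab \<in> {ab. (case ab of (a,b) \<Rightarrow> ?f a * ?g b when W w = a + b) \<noteq> 0}"
      then obtain a b where ab0: "ab = (a,b)" and ne: "(Poly_Mapping.lookup p a * Poly_Mapping.lookup q b when W w = a + b) \<noteq> 0"
        by (cases ab) simp
      from ne have "W w = a + b" by (cases "W w = a + b") simp_all
      with ab0 have ab: "ab = (a,b)" "W w = a + b" by simp_all
      then have "w = unW a @ unW b" by (simp add: plus_wd_def)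
      then have "a = W (take (length (unW a)) w)" "b = W (drop (length (unW a)) w)" by auto
      moreover have "length (unW a) \<le> length w" using \<open>w = _\<close> by simp
      ultimately show "ab \<in> (\<lambda>i. (W (take i w), W (drop i w))) ` {..length w}"
        using ab by (auto simp: image_iff)
    qed
  qed
  also have "\<dots> = (\<Sum>i\<le>length w. ?f (W (take i w)) * ?g (W (drop i w)))"
  proof (subst sum.reindex)
    show "inj_on (\<lambda>i. (W (take i w), W (drop i w))) {..length w}"
      proof (rule inj_onI)
      fix x y assume "x \<in> {..length w}" "y \<in> {..length w}"
        "(W (take x w), W (drop x w)) = (W (take y w), W (drop y w))"
      then have "length (take x w) = length (take y w)" "x \<le> length w" "y \<le> length w" by auto
      then show "x = y" by simp
    qed
    show "(\<Sum>i\<in>{..length w}. ((\<lambda>(a,b). ?f a * ?g b when W w = a + b) \<circ> (\<lambda>i. (W (take i w), W (drop i w)))) i)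
      = (\<Sum>i\<le>length w. ?f (W (take i w)) * ?g (W (drop i w)))"
      by (rule sum.cong) (auto simp: when_def)
  qed
  finally show "toF (p * q) w = fa_mult (toF p) (toF q) w"
    by (simp only: toF_def fa_mult_def)
qed




lemma W_zero_iff'[simp]: "(0 = W w) = (w = [])" by (auto simp: zero_wd_def)

lemma lookup_sc_mult: "Poly_Mapping.lookup (sc c * p) k = c * Poly_Mapping.lookup (p::'k::comm_semiring_1 R) k"
proof -
  have "sc c * p = Poly_Mapping.map ((*) c) p" by (simp add: sc_def mult_map_scale_conv_mult)
  then show ?thesis by (simp add: map.rep_eq when_def)
qed

lemma toF_sc1: "toF (sc c) = (\<lambda>w. if w = [] then c else 0)"
  by (rule ext) (simp add: toF_def sc_def lookup_single when_def)

lemma sc_comm: "p * sc c = sc c * (p::'k::comm_semiring_1 R)"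
proof (rule toF_inj, rule ext)
  fix w
  have "toF (p * sc c) w = (\<Sum>i\<le>length w. toF p (take i w) * (if drop i w = [] then c else 0))"
    by (simp add: toF_mult fa_mult_def toF_sc1)
  also have "\<dots> = (\<Sum>i\<le>length w. if i = length w then toF p w * c else 0)"
    by (rule sum.cong) auto
  also have "\<dots> = toF p w * c" by simp
  finally show "toF (p * sc c) w = toF (sc c * p) w"
    by (simp add: toF_sc fa_smult_def mult.commute)
qed

lemma sc_left: "p * (sc c * q) = sc c * (p * (q::'k::comm_semiring_1 R))"
  by (metis mult.assoc sc_comm)

lemma sc_mult: "sc a * sc b = sc (a * b)"
  by (simp add: sc_def mult_single)
lemma sc_mult2: "sc a * (sc b * p) = sc (a * b) * p"
  by (simp add: mult.assoc[symmetric] sc_mult)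
lemma sc_add: "sc (a + b) = sc a + sc b"
  by (simp add: sc_def single_add)
lemma sc_one[simp]: "sc 1 = 1" by (simp add: sc_def)
lemma sc_zero[simp]: "sc 0 = 0" by (simp add: sc_def)

definition gD :: "'k::comm_ring_1 R" where "gD = Poly_Mapping.single (W [True]) 1"
definition gU :: "'k::comm_ring_1 R" where "gU = Poly_Mapping.single (W [False]) 1"

lemma toF_gD: "toF gD = gen_d"
  by (rule ext) (auto simp: toF_def gD_def gen_d_def fa_mono_def lookup_single when_def)
lemma toF_gU: "toF gU = gen_u"
  by (rule ext) (auto simp: toF_def gU_def gen_u_def fa_mono_def lookup_single when_def)

lemma toF_pow: "toF ((p::'k::comm_ring_1 R) ^ n) = fa_pow (toF p) n"
  by (induction n) (simp_all add: toF_one toF_mult)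

definition Om :: "'k::comm_ring_1 \<Rightarrow> 'k R" where
  "Om \<alpha> = gD * gU - sc \<alpha> * (gU * gD) - 1"

lemma toF_Om: "toF (Om \<alpha>) = dua_omega \<alpha>"
  unfolding Om_def
  apply (simp only: toF_diff toF_sc toF_one)
  apply (simp only: toF_mult toF_gD toF_gU dua_omega_def)
  done

definition E :: "'k::comm_ring_1 \<Rightarrow> nat \<Rightarrow> nat \<Rightarrow> 'k R" where
  "E \<alpha> i l = gU ^ i * (Om \<alpha> * gD ^ l)"

lemma toF_E: "toF (E \<alpha> i l) = omega_basis \<alpha> i l"
  by (simp add: E_def omega_basis_def toF_mult toF_pow toF_Om toF_gU toF_gD)

lemma toF_sum: "toF (\<Sum>x\<in>S. f x) = fa_sum S (\<lambda>x. toF (f x))"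
  by (rule ext) (simp add: toF_def fa_sum_def lookup_sum)

lemma tsi_carrier: "f \<in> two_sided_ideal S \<Longrightarrow> f \<in> fa_carrier"
proof (induction rule: two_sided_ideal.induct)
  case (gen s) then show ?case by simp
next
  case zero then show ?case by (metis toF_carrier toF_zero)
next
  case (add a b) then show ?case by (metis toF_carrier toF_add toF_toR)
next
  case (mult a x y) then show ?case by (metis toF_carrier toF_mult toF_toR)
qed

definition TI :: "'k::comm_ring_1 fa set \<Rightarrow> 'k R set" where
  "TI S = {p. toF p \<in> two_sided_ideal S}"

lemma TI_zero: "0 \<in> TI S"
  by (simp add: TI_def toF_zero two_sided_ideal.zero)
lemma TI_add: "a \<in> TI S \<Longrightarrow> b \<in> TI S \<Longrightarrow> a + b \<in> TI S"
  by (simp add: TI_def toF_add two_sided_ideal.add)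
lemma TI_mult: "a \<in> TI S \<Longrightarrow> x * a * y \<in> TI S"
  unfolding TI_def mult.assoc
  by (simp add: toF_mult two_sided_ideal.mult toF_carrier)
lemma TI_left: "a \<in> TI S \<Longrightarrow> x * a \<in> TI S"
  using TI_mult[of a S x 1] by simp
lemma TI_right: "a \<in> TI S \<Longrightarrow> a * y \<in> TI S"
  using TI_mult[of a S 1 y] by simp
lemma TI_uminus: "a \<in> TI S \<Longrightarrow> - a \<in> TI S"
  using TI_left[of a S "-1"] by simp
lemma TI_diff: "a \<in> TI S \<Longrightarrow> b \<in> TI S \<Longrightarrow> a - b \<in> TI S"
  using TI_add[OF _ TI_uminus] by (metis diff_conv_add_uminus)
lemma TI_of: "f \<in> two_sided_ideal S \<Longrightarrow> toR f \<in> TI S"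
  by (simp add: TI_def toF_toR tsi_carrier)

abbreviation "Jr \<alpha> \<equiv> TI (downup_rels \<alpha> 0 1 \<union>
      {fa_mult a b | a b. a \<in> omega_ideal \<alpha> \<and> b \<in> omega_ideal \<alpha>})"
abbreviation "Ir \<alpha> \<equiv> TI (downup_rels \<alpha> 0 1 \<union> {dua_omega \<alpha>})"

lemma Jr_iff: "p \<in> Jr \<alpha> \<longleftrightarrow> toF p \<in> omega_sq \<alpha>"
  by (simp add: TI_def omega_sq_def)
lemma Ir_iff: "p \<in> Ir \<alpha> \<longleftrightarrow> toF p \<in> omega_ideal \<alpha>"
  by (simp add: TI_def omega_ideal_def)

lemma DU: "gD * gU = Om \<alpha> + sc \<alpha> * (gU * gD) + 1"
  by (simp add: Om_def)

lemma rel1: "toF (gD * Om \<alpha>) = fa_sub (fa_mult gen_d (fa_mult gen_d gen_u))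
        (fa_add (fa_smult \<alpha> (fa_mult gen_d (fa_mult gen_u gen_d)))
          (fa_add (fa_smult 0 (fa_mult gen_u (fa_mult gen_d gen_d))) (fa_smult 1 gen_d)))"
proof -
  have "gD * Om \<alpha> = gD * (gD * gU) - (sc \<alpha> * (gD * (gU * gD)) + (sc 0 * (gU * (gD * gD)) + sc 1 * gD))"
    by (simp add: Om_def algebra_simps sc_left)
  then show ?thesis
    apply (simp only: toF_diff toF_add toF_sc)
    apply (simp only: toF_mult toF_gD toF_gU)
    done
qed

lemma rel2: "toF (Om \<alpha> * gU) = fa_sub (fa_mult gen_d (fa_mult gen_u gen_u))
        (fa_add (fa_smult \<alpha> (fa_mult gen_u (fa_mult gen_d gen_u)))
          (fa_add (fa_smult 0 (fa_mult gen_u (fa_mult gen_u gen_d))) (fa_smult 1 gen_u)))"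
proof -
  have "Om \<alpha> * gU = gD * (gU * gU) - (sc \<alpha> * (gU * (gD * gU)) + (sc 0 * (gU * (gU * gD)) + sc 1 * gU))"
    by (simp add: Om_def algebra_simps sc_left)
  then show ?thesis
    apply (simp only: toF_diff toF_add toF_sc)
    apply (simp only: toF_mult toF_gD toF_gU)
    done
qed

lemma rels_eq: "downup_rels \<alpha> 0 1 = {toF (gD * Om \<alpha>), toF (Om \<alpha> * gU)}"
  by (simp only: downup_rels_def rel1 rel2)

lemma Jr_gen: "s \<in> downup_rels \<alpha> 0 1 \<Longrightarrow> toR s \<in> Jr \<alpha>"
  by (rule TI_of) (auto intro!: two_sided_ideal.gen simp: rels_eq toF_carrier)

lemma DOm_J: "gD * Om \<alpha> \<in> Jr \<alpha>"
  using Jr_gen[of "toF (gD * Om \<alpha>)" \<alpha>] by (simp add: rels_eq)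
lemma OmU_J: "Om \<alpha> * gU \<in> Jr \<alpha>"
  using Jr_gen[of "toF (Om \<alpha> * gU)" \<alpha>] by (simp add: rels_eq)

lemma Om_I: "Om \<alpha> \<in> Ir \<alpha>"
  unfolding TI_def by (auto intro!: two_sided_ideal.gen simp: toF_Om[symmetric] toF_carrier)

lemma II_J: "a \<in> Ir \<alpha> \<Longrightarrow> b \<in> Ir \<alpha> \<Longrightarrow> a * b \<in> Jr \<alpha>"
  unfolding TI_def
  using toF_carrier[of "a*b", unfolded toF_mult]
  by (auto intro!: two_sided_ideal.gen simp: toF_mult omega_ideal_def)




definition qn :: "'k::comm_ring_1 \<Rightarrow> nat \<Rightarrow> 'k" where "qn \<alpha> n = (\<Sum>k<n. \<alpha> ^ k)"

lemma qn_0[simp]: "qn \<alpha> 0 = 0" by (simp add: qn_def)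
lemma qn_Suc: "qn \<alpha> (Suc n) = 1 + \<alpha> * qn \<alpha> n"
  unfolding qn_def sum.lessThan_Suc_shift by (simp add: sum_distrib_left)
lemma qn_1[simp]: "qn \<alpha> 1 = 1" by (simp add: qn_def)

lemma scU: "gU * (sc c * q) = sc c * (gU * q)" by (rule sc_left)
lemma scD: "gD * (sc c * q) = sc c * (gD * q)" by (rule sc_left)
lemma scOm: "Om \<alpha> * (sc c * q) = sc c * (Om \<alpha> * q)" by (rule sc_left)

lemma LD: "gD * (gU ^ Suc i * Om \<alpha>) - sc (qn \<alpha> (Suc i)) * (gU ^ i * Om \<alpha>) \<in> Jr \<alpha>"
proof (induction i)
  case 0
  have "gD * (gU ^ Suc 0 * Om \<alpha>) - sc (qn \<alpha> (Suc 0)) * (gU ^ 0 * Om \<alpha>)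
      = (gD * gU) * Om \<alpha> - Om \<alpha>" by (simp add: mult.assoc qn_Suc)
  also have "\<dots> = Om \<alpha> * Om \<alpha> + (sc \<alpha> * gU) * (gD * Om \<alpha>)"
    by (simp only: DU[of \<alpha>]) (simp add: algebra_simps)
  finally show ?case
    by (simp only:) (intro TI_add II_J Om_I TI_left DOm_J)
next
  case (Suc i)
  let ?X = "gU ^ Suc i * Om \<alpha>"
  have "gD * (gU ^ Suc (Suc i) * Om \<alpha>) - sc (qn \<alpha> (Suc (Suc i))) * (gU ^ Suc i * Om \<alpha>)
      = (gD * gU) * ?X - sc (1 + \<alpha> * qn \<alpha> (Suc i)) * ?X"
    by (simp add: mult.assoc qn_Suc[of \<alpha> "Suc i"])
  also have "\<dots> = Om \<alpha> * ?X + (sc \<alpha> * gU) * (gD * ?X - sc (qn \<alpha> (Suc i)) * (gU ^ i * Om \<alpha>))"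
  proof -
    have h1: "sc \<alpha> * (gU * (sc (qn \<alpha> (Suc i)) * (gU ^ i * Om \<alpha>))) = sc (\<alpha> * qn \<alpha> (Suc i)) * ?X"
      by (simp only: scU sc_mult2 mult.assoc power_Suc)
    show ?thesis
      by (simp only: DU[of \<alpha>]) (simp add: algebra_simps sc_add h1)
  qed
  finally show ?case
    by (simp only:) (intro TI_add II_J Om_I TI_left Suc TI_right)
qed




lemma scDp: "gD ^ n * (sc c * q) = sc c * (gD ^ n * q)" by (rule sc_left)
lemma scUp: "gU ^ n * (sc c * q) = sc c * (gU ^ n * q)" by (rule sc_left)

lemma RU: "Om \<alpha> * gD ^ Suc l * gU - sc (qn \<alpha> (Suc l)) * (Om \<alpha> * gD ^ l) \<in> Jr \<alpha>"
proof (induction l)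
  case 0
  have "Om \<alpha> * gD ^ Suc 0 * gU - sc (qn \<alpha> (Suc 0)) * (Om \<alpha> * gD ^ 0)
      = Om \<alpha> * (gD * gU) - Om \<alpha>" by (simp add: mult.assoc qn_Suc)
  also have "\<dots> = Om \<alpha> * Om \<alpha> + sc \<alpha> * ((Om \<alpha> * gU) * gD)"
    by (simp only: DU[of \<alpha>]) (simp add: algebra_simps scOm)
  finally show ?case
    by (simp only:) (intro TI_add II_J Om_I TI_left TI_right OmU_J)
next
  case (Suc l)
  let ?X = "Om \<alpha> * gD ^ Suc l"
  have "Om \<alpha> * gD ^ Suc (Suc l) * gU - sc (qn \<alpha> (Suc (Suc l))) * (Om \<alpha> * gD ^ Suc l)
      = ?X * (gD * gU) - sc (1 + \<alpha> * qn \<alpha> (Suc l)) * ?X"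
    by (simp add: mult.assoc qn_Suc[of \<alpha> "Suc l"] power_Suc2[of gD "Suc l"] del: power_Suc)
  also have "\<dots> = ?X * Om \<alpha> + sc \<alpha> * ((?X * gU - sc (qn \<alpha> (Suc l)) * (Om \<alpha> * gD ^ l)) * gD)"
  proof -
    have h1: "sc \<alpha> * (sc (qn \<alpha> (Suc l)) * (Om \<alpha> * (gD ^ l * gD))) = sc (\<alpha> * qn \<alpha> (Suc l)) * ?X"
      by (simp only: sc_mult2 power_Suc2)
    show ?thesis
      by (simp only: DU[of \<alpha>]) (simp add: algebra_simps sc_add h1 scOm scDp del: power_Suc)
  qed
  finally show ?case
    by (simp only:) (intro TI_add II_J Om_I TI_left TI_right Suc TI_mult)
qed

lemma LDgen: "gD * E \<alpha> i l - sc (qn \<alpha> i) * E \<alpha> (i - 1) l \<in> Jr \<alpha>"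
proof (cases i)
  case 0
  have "gD * E \<alpha> i l - sc (qn \<alpha> i) * E \<alpha> (i - 1) l = (gD * Om \<alpha>) * gD ^ l"
    using 0 by (simp add: E_def mult.assoc)
  then show ?thesis by (simp only:) (intro TI_right DOm_J)
next
  case (Suc j)
  have "gD * E \<alpha> i l - sc (qn \<alpha> i) * E \<alpha> (i - 1) l
     = (gD * (gU ^ Suc j * Om \<alpha>) - sc (qn \<alpha> (Suc j)) * (gU ^ j * Om \<alpha>)) * gD ^ l"
    using Suc by (simp add: E_def mult.assoc algebra_simps del: power_Suc)
  then show ?thesis by (simp only:) (intro TI_right LD)
qed

lemma RUgen: "E \<alpha> i l * gU - sc (qn \<alpha> l) * E \<alpha> i (l - 1) \<in> Jr \<alpha>"
proof (cases l)
  case 0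
  have "E \<alpha> i l * gU - sc (qn \<alpha> l) * E \<alpha> i (l - 1) = gU ^ i * (Om \<alpha> * gU)"
    using 0 by (simp add: E_def mult.assoc)
  then show ?thesis by (simp only:) (intro TI_left OmU_J)
next
  case (Suc j)
  have "E \<alpha> i l * gU - sc (qn \<alpha> l) * E \<alpha> i (l - 1)
     = gU ^ i * (Om \<alpha> * gD ^ Suc j * gU - sc (qn \<alpha> (Suc j)) * (Om \<alpha> * gD ^ j))"
    using Suc by (simp add: E_def mult.assoc algebra_simps sc_left del: power_Suc)
  then show ?thesis by (simp only:) (intro TI_left RU)
qed




definition comb :: "'k::comm_ring_1 \<Rightarrow> (nat \<times> nat) set \<Rightarrow> (nat \<times> nat \<Rightarrow> 'k) \<Rightarrow> 'k R" where
  "comb \<alpha> S c = (\<Sum>x\<in>S. sc (c x) * E \<alpha> (fst x) (snd x))"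

definition Spn :: "'k::comm_ring_1 \<Rightarrow> 'k R \<Rightarrow> bool" where
  "Spn \<alpha> q = (\<exists>S c. finite S \<and> q - comb \<alpha> S c \<in> Jr \<alpha>)"

lemma Spn_J: "q \<in> Jr \<alpha> \<Longrightarrow> Spn \<alpha> q"
  unfolding Spn_def by (rule exI[of _ "{}"]) (simp add: comb_def)

lemma Spn_cong: "Spn \<alpha> q' \<Longrightarrow> q - q' \<in> Jr \<alpha> \<Longrightarrow> Spn \<alpha> q"
  unfolding Spn_def
proof (elim exE conjE)
  fix S c assume "finite S" "q' - comb \<alpha> S c \<in> Jr \<alpha>" "q - q' \<in> Jr \<alpha>"
  then have "q - comb \<alpha> S c \<in> Jr \<alpha>"
    using TI_add[of "q - q'" _ "q' - comb \<alpha> S c"] by simp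
  then show "\<exists>S c. finite S \<and> q - comb \<alpha> S c \<in> Jr \<alpha>" using \<open>finite S\<close> by blast
qed

lemma comb_restrict: "finite T \<Longrightarrow> S \<subseteq> T \<Longrightarrow>
   comb \<alpha> T (\<lambda>x. if x \<in> S then c x else 0) = comb \<alpha> S c"
proof -
  assume T: "finite T" "S \<subseteq> T"
  have "comb \<alpha> T (\<lambda>x. if x \<in> S then c x else 0) =
     (\<Sum>x\<in>T. if x \<in> S then sc (c x) * E \<alpha> (fst x) (snd x) else 0)"
    unfolding comb_def by (rule sum.cong) auto
  also have "\<dots> = (\<Sum>x\<in>T \<inter> S. sc (c x) * E \<alpha> (fst x) (snd x))"
    using T(1) by (rule sum.inter_restrict[symmetric])
  also have "T \<inter> S = S" using T(2) by blast
  finally show ?thesis by (simp add: comb_def)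
qed

lemma comb_add: "comb \<alpha> S (\<lambda>x. c1 x + c2 x) = comb \<alpha> S c1 + comb \<alpha> S c2"
  unfolding comb_def by (simp add: sc_add distrib_right sum.distrib)

lemma Spn_add: "Spn \<alpha> a \<Longrightarrow> Spn \<alpha> b \<Longrightarrow> Spn \<alpha> (a + b)"
  unfolding Spn_def
proof (elim exE conjE)
  fix S1 c1 S2 c2 assume h: "finite S1" "a - comb \<alpha> S1 c1 \<in> Jr \<alpha>" "finite S2" "b - comb \<alpha> S2 c2 \<in> Jr \<alpha>"
  let ?c = "\<lambda>x. (if x \<in> S1 then c1 x else 0) + (if x \<in> S2 then c2 x else 0)"
  have "comb \<alpha> (S1 \<union> S2) ?c = comb \<alpha> S1 c1 + comb \<alpha> S2 c2"
    using h by (simp add: comb_add comb_restrict)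
  then have e: "a + b - comb \<alpha> (S1 \<union> S2) ?c = (a - comb \<alpha> S1 c1) + (b - comb \<alpha> S2 c2)"
    by (simp add: algebra_simps)
  have "a + b - comb \<alpha> (S1 \<union> S2) ?c \<in> Jr \<alpha>" unfolding e by (rule TI_add[OF h(2) h(4)])
  then show "\<exists>S c. finite S \<and> a + b - comb \<alpha> S c \<in> Jr \<alpha>" using h by blast
qed

lemma Spn_sc: "Spn \<alpha> q \<Longrightarrow> Spn \<alpha> (sc a * q)"
  unfolding Spn_def
proof (elim exE conjE)
  fix S c assume h: "finite S" "q - comb \<alpha> S c \<in> Jr \<alpha>"
  have "sc a * comb \<alpha> S c = comb \<alpha> S (\<lambda>x. a * c x)"
    unfolding comb_def by (simp add: sum_distrib_left sc_mult2)
  then have "sc a * q - comb \<alpha> S (\<lambda>x. a * c x) = sc a * (q - comb \<alpha> S c)"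
    by (simp add: algebra_simps)
  then have "sc a * q - comb \<alpha> S (\<lambda>x. a * c x) \<in> Jr \<alpha>" using TI_left[OF h(2)] by simp
  then show "\<exists>S c. finite S \<and> sc a * q - comb \<alpha> S c \<in> Jr \<alpha>" using h by blast
qed

lemma Spn_basic: "Spn \<alpha> (sc a * E \<alpha> i l)"
  unfolding Spn_def
  by (rule exI[of _ "{(i,l)}"], rule exI[of _ "\<lambda>_. a"]) (simp add: comb_def TI_zero)

lemma Spn_E: "Spn \<alpha> (E \<alpha> i l)"
  using Spn_basic[of \<alpha> 1] by simp

lemma Spn_zero: "Spn \<alpha> 0" by (rule Spn_J) (rule TI_zero)

lemma Spn_sum: "finite A \<Longrightarrow> (\<And>x. x \<in> A \<Longrightarrow> Spn \<alpha> (f x)) \<Longrightarrow> Spn \<alpha> (\<Sum>x\<in>A. f x)"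
  by (induction A rule: finite_induct) (auto intro: Spn_add Spn_zero)

lemma Spn_comb_gen:
  assumes "\<And>i l. Spn \<alpha> (g (E \<alpha> i l))" and "\<And>c p. g (sc c * p) = sc c * g p"
    and "\<And>(h::nat \<times> nat \<Rightarrow> 'k::comm_ring_1 R) S. g (\<Sum>x\<in>S. h x) = (\<Sum>x\<in>S. g (h x))"
  shows "finite S \<Longrightarrow> Spn \<alpha> (g (comb \<alpha> S c))"
  unfolding comb_def assms(3) assms(2) by (rule Spn_sum, assumption) (intro Spn_sc assms(1))

lemma Spn_closed:
  assumes "\<And>i l. Spn \<alpha> (g (E \<alpha> i l))" and "\<And>c p. g (sc c * p) = sc c * g p"
    and "\<And>(h::nat \<times> nat \<Rightarrow> 'k::comm_ring_1 R) S. g (\<Sum>x\<in>S. h x) = (\<Sum>x\<in>S. g (h x))"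
    and "\<And>p. p \<in> Jr \<alpha> \<Longrightarrow> g p \<in> Jr \<alpha>" and "\<And>p q. g (p - q) = g p - g q"
    and "Spn \<alpha> q"
  shows "Spn \<alpha> (g q)"
proof -
  from assms(6) obtain S c where h: "finite S" "q - comb \<alpha> S c \<in> Jr \<alpha>" unfolding Spn_def by blast
  have "Spn \<alpha> (g (comb \<alpha> S c))" using Spn_comb_gen[OF assms(1-3) h(1)] by blast
  moreover have "g q - g (comb \<alpha> S c) \<in> Jr \<alpha>" using assms(4)[OF h(2)] assms(5) by simp
  ultimately show ?thesis by (rule Spn_cong)
qed

lemma Spn_D: "Spn \<alpha> q \<Longrightarrow> Spn \<alpha> (gD * q)"
proof (rule Spn_closed[where g="\<lambda>p. gD * p"])
  show "Spn \<alpha> (gD * E \<alpha> i l)" for i l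
    by (rule Spn_cong[OF Spn_basic LDgen])
  show "gD * (sc c * p) = sc c * (gD * p)" for c p by (rule scD)
  show "gD * sum h S = (\<Sum>x\<in>S. gD * h x)" for h S by (rule sum_distrib_left)
  show "p \<in> Jr \<alpha> \<Longrightarrow> gD * p \<in> Jr \<alpha>" for p by (rule TI_left)
  show "gD * (p - q) = gD * p - gD * q" for p q by (rule right_diff_distrib)
qed

lemma Spn_U: "Spn \<alpha> q \<Longrightarrow> Spn \<alpha> (gU * q)"
proof (rule Spn_closed[where g="\<lambda>p. gU * p"])
  show "Spn \<alpha> (gU * E \<alpha> i l)" for i l
    using Spn_E[of \<alpha> "Suc i" l] by (simp add: E_def mult.assoc)
  show "gU * (sc c * p) = sc c * (gU * p)" for c p by (rule scU)
  show "gU * sum h S = (\<Sum>x\<in>S. gU * h x)" for h S by (rule sum_distrib_left)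
  show "p \<in> Jr \<alpha> \<Longrightarrow> gU * p \<in> Jr \<alpha>" for p by (rule TI_left)
  show "gU * (p - q) = gU * p - gU * q" for p q by (rule right_diff_distrib)
qed

lemma Spn_rD: "Spn \<alpha> q \<Longrightarrow> Spn \<alpha> (q * gD)"
proof (rule Spn_closed[where g="\<lambda>p. p * gD"])
  show "Spn \<alpha> (E \<alpha> i l * gD)" for i l
    using Spn_E[of \<alpha> i "Suc l"] by (simp add: E_def mult.assoc power_Suc2 del: power_Suc)
  show "(sc c * p) * gD = sc c * (p * gD)" for c p by (rule mult.assoc)
  show "sum h S * gD = (\<Sum>x\<in>S. h x * gD)" for h S by (rule sum_distrib_right)
  show "p \<in> Jr \<alpha> \<Longrightarrow> p * gD \<in> Jr \<alpha>" for p by (rule TI_right)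
  show "(p - q) * gD = p * gD - q * gD" for p q by (rule left_diff_distrib)
qed

lemma Spn_rU: "Spn \<alpha> q \<Longrightarrow> Spn \<alpha> (q * gU)"
proof (rule Spn_closed[where g="\<lambda>p. p * gU"])
  show "Spn \<alpha> (E \<alpha> i l * gU)" for i l
    by (rule Spn_cong[OF Spn_basic RUgen])
  show "(sc c * p) * gU = sc c * (p * gU)" for c p by (rule mult.assoc)
  show "sum h S * gU = (\<Sum>x\<in>S. h x * gU)" for h S by (rule sum_distrib_right)
  show "p \<in> Jr \<alpha> \<Longrightarrow> p * gU \<in> Jr \<alpha>" for p by (rule TI_right)
  show "(p - q) * gU = p * gU - q * gU" for p q by (rule left_diff_distrib)
qed




primrec mono :: "bool list \<Rightarrow> 'k::comm_ring_1 R" where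
  "mono [] = 1"
| "mono (b # w) = (if b then gD else gU) * mono w"

lemma single_mono: "Poly_Mapping.single (W w) c = sc c * (mono w :: 'k::comm_ring_1 R)"
proof (induction w arbitrary: c)
  case Nil
  show ?case by (simp add: sc_def zero_wd_def)
next
  case (Cons b w)
  have "Poly_Mapping.single (W (b # w)) c = Poly_Mapping.single (W [b] + W w) (1 * c)" by simp
  also have "\<dots> = Poly_Mapping.single (W [b]) 1 * Poly_Mapping.single (W w) c"
    by (rule mult_single[symmetric])
  also have "\<dots> = sc c * mono (b # w)"
    using Cons by (cases b) (simp_all add: gD_def[symmetric] gU_def[symmetric] sc_left)
  finally show ?case .
qed

lemma single_mono': "Poly_Mapping.single k c = sc c * (mono (unW k) :: 'k::comm_ring_1 R)"
  using single_mono[of "unW k" c] by simp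

lemma pm_decomp: "p = (\<Sum>k\<in>Poly_Mapping.keys p. Poly_Mapping.single k (Poly_Mapping.lookup p k))"
proof (rule poly_mapping_eqI)
  fix k'
  have "Poly_Mapping.lookup (\<Sum>k\<in>Poly_Mapping.keys p. Poly_Mapping.single k (Poly_Mapping.lookup p k)) k'
      = (\<Sum>k\<in>Poly_Mapping.keys p. if k = k' then Poly_Mapping.lookup p k else 0)"
    by (simp add: lookup_sum lookup_single when_def)
  also have "\<dots> = Poly_Mapping.lookup p k'"
    by (simp add: sum.delta in_keys_iff)
  finally show "Poly_Mapping.lookup p k' = Poly_Mapping.lookup (\<Sum>k\<in>Poly_Mapping.keys p. Poly_Mapping.single k (Poly_Mapping.lookup p k)) k'"
    by simp
qed

lemma Spn_mono_left: "Spn \<alpha> q \<Longrightarrow> Spn \<alpha> (mono w * q)"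
proof (induction w)
  case Nil then show ?case by simp
next
  case (Cons b w)
  then have "Spn \<alpha> (mono w * q)" by simp
  then show ?case by (cases b) (simp_all add: mult.assoc Spn_D Spn_U)
qed

lemma Spn_mono_right: "Spn \<alpha> q \<Longrightarrow> Spn \<alpha> (q * mono w)"
proof (induction w arbitrary: q)
  case Nil then show ?case by simp
next
  case (Cons b w)
  have "Spn \<alpha> (q * (if b then gD else gU))" using Cons(2) by (cases b) (simp_all add: Spn_rD Spn_rU)
  then have "Spn \<alpha> (q * (if b then gD else gU) * mono w)" by (rule Cons(1))
  then show ?case by (simp add: mult.assoc)
qed

lemma Spn_left: "Spn \<alpha> q \<Longrightarrow> Spn \<alpha> (x * q)"
proof -
  assume q: "Spn \<alpha> q"
  have "x * q = (\<Sum>k\<in>Poly_Mapping.keys x. Poly_Mapping.single k (Poly_Mapping.lookup x k)) * q"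
    by (rule arg_cong[where f="\<lambda>z. z * q"]) (rule pm_decomp)
  also have "\<dots> = (\<Sum>k\<in>Poly_Mapping.keys x. sc (Poly_Mapping.lookup x k) * (mono (unW k) * q))"
    by (simp add: sum_distrib_right single_mono' mult.assoc)
  finally show ?thesis
    by (simp only:) (intro Spn_sum finite_keys Spn_sc Spn_mono_left q)
qed

lemma Spn_right: "Spn \<alpha> q \<Longrightarrow> Spn \<alpha> (q * x)"
proof -
  assume q: "Spn \<alpha> q"
  have "q * x = q * (\<Sum>k\<in>Poly_Mapping.keys x. Poly_Mapping.single k (Poly_Mapping.lookup x k))"
    by (rule arg_cong[where f="\<lambda>z. q * z"]) (rule pm_decomp)
  also have "\<dots> = (\<Sum>k\<in>Poly_Mapping.keys x. sc (Poly_Mapping.lookup x k) * (q * mono (unW k)))"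
    by (simp add: sum_distrib_left single_mono' sc_left)
  finally show ?thesis
    by (simp only:) (intro Spn_sum finite_keys Spn_sc Spn_mono_right q)
qed

lemma toR_Om: "toR (dua_omega \<alpha>) = Om \<alpha>"
  by (simp only: toF_Om[symmetric] toR_toF)

lemma part1_R: "f \<in> omega_ideal \<alpha> \<Longrightarrow> Spn \<alpha> (toR f)"
  unfolding omega_ideal_def
proof (induction rule: two_sided_ideal.induct)
  case (gen s)
  show ?case
  proof (cases "s \<in> downup_rels \<alpha> 0 1")
    case True then show ?thesis by (intro Spn_J Jr_gen)
  next
    case False
    then have "s = dua_omega \<alpha>" using gen by simp
    then show ?thesis using Spn_E[of \<alpha> 0 0] by (simp add: toR_Om E_def)
  qed
next
  case zero
  have "toR fa_zero = (0::'a R)" by (simp only: toF_zero[symmetric] toR_toF)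
  then show ?case by (simp add: Spn_zero)
next
  case (add a b)
  have "fa_add a b = toF (toR a + toR b)"
    using add by (simp add: toF_add toF_toR tsi_carrier)
  then have "toR (fa_add a b) = toR a + toR b" by simp
  then show ?case using add by (simp add: Spn_add)
next
  case (mult a x y)
  have "fa_mult x (fa_mult a y) = toF (toR x * (toR a * toR y))"
    using mult by (simp add: toF_mult toF_toR tsi_carrier)
  then have "toR (fa_mult x (fa_mult a y)) = toR x * (toR a * toR y)" by simp
  then show ?case using mult by (simp add: Spn_left Spn_right)
qed

lemma toF_comb: "toF (comb \<alpha> S c) = fa_sum S (\<lambda>x. fa_smult (c x) (omega_basis \<alpha> (fst x) (snd x)))"
  by (simp add: comb_def toF_sum toF_sc toF_E)

lemma part1:
  fixes \<alpha> :: "'k::comm_ring_1"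
  shows "\<forall>p \<in> omega_ideal \<alpha>. \<exists>(S::(nat \<times> nat) set) c. finite S \<and>
            fa_sub p (fa_sum S (\<lambda>x. fa_smult (c x) (omega_basis \<alpha> (fst x) (snd x))))
              \<in> omega_sq \<alpha>"
proof
  fix p assume p: "p \<in> omega_ideal \<alpha>"
  from part1_R[OF p] obtain S c where h: "finite S" "toR p - comb \<alpha> S c \<in> Jr \<alpha>"
    unfolding Spn_def by blast
  have "p \<in> fa_carrier" using p[unfolded omega_ideal_def] by (rule tsi_carrier)
  then have e: "toF (toR p - comb \<alpha> S c) = fa_sub p (fa_sum S (\<lambda>x. fa_smult (c x) (omega_basis \<alpha> (fst x) (snd x))))"
    by (simp add: toF_diff toF_toR toF_comb)
  have "toF (toR p - comb \<alpha> S c) \<in> omega_sq \<alpha>" using h(2) by (simp only: Jr_iff)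
  then have "fa_sub p (fa_sum S (\<lambda>x. fa_smult (c x) (omega_basis \<alpha> (fst x) (snd x)))) \<in> omega_sq \<alpha>"
    by (simp only: e)
  with h(1) show "\<exists>(S::(nat \<times> nat) set) c. finite S \<and>
            fa_sub p (fa_sum S (\<lambda>x. fa_smult (c x) (omega_basis \<alpha> (fst x) (snd x))))
              \<in> omega_sq \<alpha>"
    by blast
qed

lemma qn_eq: "(\<alpha>::'k::field) \<noteq> 1 \<Longrightarrow> qn \<alpha> l = (\<alpha> ^ l - 1) / (\<alpha> - 1)"
proof -
  assume a: "\<alpha> \<noteq> 1"
  have "qn \<alpha> l = (1 - \<alpha> ^ l) / (1 - \<alpha>)" using a by (simp add: qn_def sum_gp_strict)
  also have "\<dots> = (- (\<alpha> ^ l - 1)) / (- (\<alpha> - 1))" by simp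
  also have "\<dots> = (\<alpha> ^ l - 1) / (\<alpha> - 1)" by (rule minus_divide_divide)
  finally show ?thesis .
qed

lemma part3:
  fixes \<alpha> :: "'k::field"
  shows "\<alpha> \<noteq> 1 \<longrightarrow> (\<forall>i l.
            fa_sub (fa_mult (omega_basis \<alpha> i l) gen_u)
                   (fa_smult ((\<alpha> ^ l - 1) / (\<alpha> - 1)) (omega_basis \<alpha> i (l - 1))) \<in> omega_sq \<alpha>
          \<and> fa_sub (fa_mult gen_d (omega_basis \<alpha> i l))
                   (fa_smult ((\<alpha> ^ i - 1) / (\<alpha> - 1)) (omega_basis \<alpha> (i - 1) l)) \<in> omega_sq \<alpha>)"
proof (intro impI allI conjI)
  fix i l assume a: "\<alpha> \<noteq> 1"
  have e1: "toF (E \<alpha> i l * gU - sc (qn \<alpha> l) * E \<alpha> i (l - 1)) =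
     fa_sub (fa_mult (omega_basis \<alpha> i l) gen_u) (fa_smult (qn \<alpha> l) (omega_basis \<alpha> i (l - 1)))"
    apply (simp only: toF_diff toF_sc)
    apply (simp only: toF_mult toF_E toF_gU)
    done
  show "fa_sub (fa_mult (omega_basis \<alpha> i l) gen_u)
                   (fa_smult ((\<alpha> ^ l - 1) / (\<alpha> - 1)) (omega_basis \<alpha> i (l - 1))) \<in> omega_sq \<alpha>"
    using RUgen[of \<alpha> i l] unfolding Jr_iff e1 by (simp only: qn_eq[OF a])
  have e2: "toF (gD * E \<alpha> i l - sc (qn \<alpha> i) * E \<alpha> (i - 1) l) =
     fa_sub (fa_mult gen_d (omega_basis \<alpha> i l)) (fa_smult (qn \<alpha> i) (omega_basis \<alpha> (i - 1) l))"
    apply (simp only: toF_diff toF_sc)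
    apply (simp only: toF_mult toF_E toF_gD)
    done
  show "fa_sub (fa_mult gen_d (omega_basis \<alpha> i l))
                   (fa_smult ((\<alpha> ^ i - 1) / (\<alpha> - 1)) (omega_basis \<alpha> (i - 1) l)) \<in> omega_sq \<alpha>"
    using LDgen[of \<alpha> i l] unfolding Jr_iff e2 by (simp only: qn_eq[OF a])
qed




type_synonym 'k vec = "nat + nat \<times> nat \<Rightarrow> 'k"

definition vadd :: "'k::comm_ring_1 vec \<Rightarrow> 'k vec \<Rightarrow> 'k vec" where "vadd v w = (\<lambda>k. v k + w k)"
definition vsc :: "'k::comm_ring_1 \<Rightarrow> 'k vec \<Rightarrow> 'k vec" where "vsc c v = (\<lambda>k. c * v k)"
definition vz :: "'k::comm_ring_1 vec" where "vz = (\<lambda>k. 0)"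

definition lin :: "('k::comm_ring_1 vec \<Rightarrow> 'k vec) \<Rightarrow> bool" where
  "lin T = ((\<forall>v w. T (vadd v w) = vadd (T v) (T w)) \<and> (\<forall>c v. T (vsc c v) = vsc c (T v)))"

definition opD :: "'k::comm_ring_1 \<Rightarrow> nat \<Rightarrow> 'k vec \<Rightarrow> 'k vec" where
  "opD \<alpha> B v = (\<lambda>k. case k of
     Inl i \<Rightarrow> qn \<alpha> (Suc i) * v (Inl (Suc i)) +
        (if 1 \<le> i then \<alpha> ^ i * (v (Inr (i, B - 1)) + v (Inr (Suc i, B))) else 0)
   | Inr ab \<Rightarrow> (case ab of (a, b) \<Rightarrow>
        (if 1 \<le> b then \<alpha> ^ a * v (Inr (a, b - 1)) else 0) + qn \<alpha> (Suc a) * v (Inr (Suc a, b))))"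

definition opU :: "nat \<Rightarrow> 'k::comm_ring_1 vec \<Rightarrow> 'k vec" where
  "opU B v = (\<lambda>k. case k of
     Inl i \<Rightarrow> (if 1 \<le> i then v (Inl (i - 1)) else 0) + (if i = 1 then v (Inr (0, B)) else 0)
   | Inr ab \<Rightarrow> (case ab of (a, b) \<Rightarrow> if 1 \<le> a then v (Inr (a - 1, b)) else 0))"

definition gop :: "'k::comm_ring_1 \<Rightarrow> nat \<Rightarrow> bool \<Rightarrow> 'k vec \<Rightarrow> 'k vec" where
  "gop \<alpha> B b = (if b then opD \<alpha> B else opU B)"

primrec rw :: "'k::comm_ring_1 \<Rightarrow> nat \<Rightarrow> bool list \<Rightarrow> 'k vec \<Rightarrow> 'k vec" where
  "rw \<alpha> B [] v = v"
| "rw \<alpha> B (b # w) v = gop \<alpha> B b (rw \<alpha> B w v)"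

definition rho :: "'k::comm_ring_1 \<Rightarrow> nat \<Rightarrow> 'k R \<Rightarrow> 'k vec \<Rightarrow> 'k vec" where
  "rho \<alpha> B p v = (\<lambda>k. \<Sum>x\<in>Poly_Mapping.keys p. Poly_Mapping.lookup p x * rw \<alpha> B (unW x) v k)"

lemma lin_opD: "lin (opD \<alpha> B)"
  unfolding lin_def
  by (auto simp: opD_def vadd_def vsc_def fun_eq_iff algebra_simps split: sum.split prod.split)

lemma lin_opU: "lin (opU B)"
  unfolding lin_def
  by (auto simp: opU_def vadd_def vsc_def fun_eq_iff algebra_simps split: sum.split prod.split)

lemma lin_gop: "lin (gop \<alpha> B b)"
  by (simp add: gop_def lin_opD lin_opU)

lemma lin_rw: "lin (rw \<alpha> B w)"
proof (induction w)
  case Nil then show ?case by (simp add: lin_def)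
next
  case (Cons b w)
  then show ?case using lin_gop[of \<alpha> B b] by (simp add: lin_def)
qed

lemma lin_zero: "lin T \<Longrightarrow> T vz = vz"
proof -
  assume "lin T"
  then have "T (vsc 0 vz) = vsc 0 (T vz)" by (simp add: lin_def)
  moreover have "vsc 0 (x::'a vec) = vz" for x by (simp add: vsc_def vz_def)
  ultimately show ?thesis by simp
qed

lemma rw_append: "rw \<alpha> B (a @ b) v = rw \<alpha> B a (rw \<alpha> B b v)"
  by (induction a) simp_all

lemma rho_superset:
  assumes "finite A" "Poly_Mapping.keys p \<subseteq> A"
  shows "rho \<alpha> B p v = (\<lambda>k. \<Sum>x\<in>A. Poly_Mapping.lookup p x * rw \<alpha> B (unW x) v k)"
proof (rule ext)
  fix k
  have "(\<Sum>x\<in>A. Poly_Mapping.lookup p x * rw \<alpha> B (unW x) v k) =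
        (\<Sum>x\<in>Poly_Mapping.keys p. Poly_Mapping.lookup p x * rw \<alpha> B (unW x) v k)"
    by (rule sum.mono_neutral_right) (use assms in \<open>auto simp: in_keys_iff\<close>)
  then show "rho \<alpha> B p v k = (\<Sum>x\<in>A. Poly_Mapping.lookup p x * rw \<alpha> B (unW x) v k)"
    by (simp add: rho_def)
qed

lemma rho_add: "rho \<alpha> B (p + q) v = vadd (rho \<alpha> B p v) (rho \<alpha> B q v)"
proof -
  let ?A = "Poly_Mapping.keys p \<union> Poly_Mapping.keys q"
  have "rho \<alpha> B (p + q) v = (\<lambda>k. \<Sum>x\<in>?A. Poly_Mapping.lookup (p + q) x * rw \<alpha> B (unW x) v k)"
    by (rule rho_superset) (simp_all add: keys_add)
  moreover have "rho \<alpha> B p v = (\<lambda>k. \<Sum>x\<in>?A. Poly_Mapping.lookup p x * rw \<alpha> B (unW x) v k)"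
    by (rule rho_superset) simp_all
  moreover have "rho \<alpha> B q v = (\<lambda>k. \<Sum>x\<in>?A. Poly_Mapping.lookup q x * rw \<alpha> B (unW x) v k)"
    by (rule rho_superset) simp_all
  ultimately show ?thesis
    by (simp add: vadd_def lookup_add distrib_right sum.distrib)
qed

lemma rho_single: "rho \<alpha> B (Poly_Mapping.single x c) v = vsc c (rw \<alpha> B (unW x) v)"
proof -
  have "rho \<alpha> B (Poly_Mapping.single x c) v =
     (\<lambda>k. \<Sum>y\<in>{x}. Poly_Mapping.lookup (Poly_Mapping.single x c) y * rw \<alpha> B (unW y) v k)"
    by (rule rho_superset) auto
  then show ?thesis by (simp add: vsc_def)
qed

lemma rho_0: "rho \<alpha> B 0 v = vz"
  by (simp add: rho_def vz_def)

lemma lin_rho: "lin (rho \<alpha> B p)"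
proof -
  have l: "lin (rw \<alpha> B w)" for w by (rule lin_rw)
  show ?thesis
    unfolding lin_def
  proof (intro conjI allI)
    fix v w
    show "rho \<alpha> B p (vadd v w) = vadd (rho \<alpha> B p v) (rho \<alpha> B p w)"
      using l by (simp add: rho_def lin_def vadd_def distrib_left sum.distrib)
  next
    fix c v
    show "rho \<alpha> B p (vsc c v) = vsc c (rho \<alpha> B p v)"
      using l by (simp add: rho_def lin_def vsc_def sum_distrib_left mult.left_commute)
  qed
qed

lemma pm_induct:
  fixes P :: "'k::comm_ring_1 R \<Rightarrow> bool"
  assumes "P 0" "\<And>k c. P (Poly_Mapping.single k c)" "\<And>p q. P p \<Longrightarrow> P q \<Longrightarrow> P (p + q)"
  shows "P p"
proof -
  have "P (\<Sum>k\<in>A. Poly_Mapping.single k (f k))" if "finite A" for A and f :: "wd \<Rightarrow> 'k"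
    using that by (induction A rule: finite_induct) (simp_all add: assms)
  then show ?thesis by (subst pm_decomp) simp
qed

lemma unW_plus: "unW (x + y) = unW x @ unW y" by (simp add: plus_wd_def)

lemma rho_mult: "rho \<alpha> B (p * q) v = rho \<alpha> B p (rho \<alpha> B q v)"
proof -
  have "\<forall>v. rho \<alpha> B (p * q) v = rho \<alpha> B p (rho \<alpha> B q v)"
  proof (induction p rule: pm_induct)
    case 1 then show ?case by (simp add: rho_0)
  next
    case (2 k c)
    show ?case
    proof (induction q rule: pm_induct)
      case 1 then show ?case by (simp add: rho_0 lin_zero[OF lin_rho])
    next
      case (2 k' c')
      show ?case
        using lin_rw[of \<alpha> B "unW k"]
        by (simp add: mult_single rho_single rw_append unW_plus lin_def vsc_def mult.assoc)
    next
      case (3 q1 q2)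
      then show ?case using lin_rho[of \<alpha> B "Poly_Mapping.single k c"]
        by (simp add: distrib_left rho_add lin_def)
    qed
  next
    case (3 p1 p2)
    then show ?case by (simp add: distrib_right rho_add)
  qed
  then show ?thesis by blast
qed




definition FF :: "nat \<Rightarrow> 'k::comm_ring_1 vec \<Rightarrow> 'k vec" where
  "FF B v = (\<lambda>k. case k of Inl i \<Rightarrow> (if i = 0 then v (Inr (0, B)) else 0) | Inr ab \<Rightarrow> 0)"

lemma key_comp:
  assumes B: "1 \<le> B"
  shows "(\<lambda>k. opD \<alpha> B (opU B v) k - \<alpha> * opU B (opD \<alpha> B v) k - v k) = FF B v"
proof (rule ext)
  fix k
  show "opD \<alpha> B (opU B v) k - \<alpha> * opU B (opD \<alpha> B v) k - v k = FF B v k"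
  proof (cases k)
    case (Inl i)
    show ?thesis
    proof (cases i)
      case 0 then show ?thesis using Inl by (simp add: opD_def opU_def FF_def qn_Suc)
    next
      case (Suc j)
      show ?thesis
      proof (cases j)
        case 0 then show ?thesis using Inl Suc B
          by (simp add: opD_def opU_def FF_def qn_Suc algebra_simps)
      next
        case (Suc j')
        then show ?thesis using Inl \<open>i = Suc j\<close>
          by (simp add: opD_def opU_def FF_def qn_Suc algebra_simps)
      qed
    qed
  next
    case (Inr ab)
    obtain a b where ab: "ab = (a, b)" by (cases ab)
    show ?thesis
    proof (cases a)
      case 0 then show ?thesis using Inr ab by (simp add: opD_def opU_def FF_def qn_Suc)
    next
      case (Suc a')
      then show ?thesis using Inr ab by (simp add: opD_def opU_def FF_def qn_Suc algebra_simps)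
    qed
  qed
qed

lemma rho_gD: "rho \<alpha> B gD v = opD \<alpha> B v"
  by (simp add: gD_def rho_single vsc_def gop_def)
lemma rho_gU: "rho \<alpha> B gU v = opU B v"
  by (simp add: gU_def rho_single vsc_def gop_def)
lemma rho_one: "rho \<alpha> B 1 v = v"
proof -
  have "rho \<alpha> B (Poly_Mapping.single (W []) 1) v = v" by (simp add: rho_single vsc_def)
  moreover have "Poly_Mapping.single (W []) (1::'a) = 1" by (simp add: zero_wd_def[symmetric])
  ultimately show ?thesis by simp
qed
lemma rho_sc: "rho \<alpha> B (sc c * p) v = vsc c (rho \<alpha> B p v)"
  by (simp add: rho_mult sc_def rho_single zero_wd_def vsc_def)
lemma rho_diff: "rho \<alpha> B (p - q) v = (\<lambda>k. rho \<alpha> B p v k - rho \<alpha> B q v k)"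
proof -
  have e: "p - q = p + sc (-1) * q" by (simp add: sc_def single_uminus)
  show ?thesis by (simp only: e rho_add rho_sc) (simp add: vadd_def vsc_def)
qed

lemma rho_Om: "1 \<le> B \<Longrightarrow> rho \<alpha> B (Om \<alpha>) v = FF B v"
  by (simp only: Om_def rho_diff rho_sc) (simp add: rho_mult rho_gD rho_gU rho_one vsc_def key_comp)

definition w1 :: "'k::comm_ring_1 vec \<Rightarrow> bool" where "w1 v = (\<forall>ab. v (Inr ab) = 0)"
definition PQ :: "('k::comm_ring_1 vec \<Rightarrow> 'k vec) \<Rightarrow> bool" where
  "PQ T = (\<forall>v. w1 v \<longrightarrow> w1 (T v))"
definition PP :: "('k::comm_ring_1 vec \<Rightarrow> 'k vec) \<Rightarrow> bool" where
  "PP T = ((\<forall>v. w1 v \<longrightarrow> T v = vz) \<and> (\<forall>v. w1 (T v)))"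

lemma PQ_rw: "PQ (rw \<alpha> B w)"
proof (induction w)
  case Nil then show ?case by (simp add: PQ_def)
next
  case (Cons b w)
  have "PQ (gop \<alpha> B b)"
    by (auto simp: PQ_def w1_def gop_def opD_def opU_def)
  with Cons show ?case by (simp add: PQ_def)
qed

lemma PQ_rho: "PQ (rho \<alpha> B p)"
  using PQ_rw[of \<alpha> B] by (simp add: PQ_def w1_def rho_def)

lemma PP_FF: "PP (FF B)"
  by (auto simp: PP_def FF_def w1_def vz_def fun_eq_iff split: sum.split)

lemma rho_DOm: "1 \<le> B \<Longrightarrow> rho \<alpha> B (gD * Om \<alpha>) v = vz"
proof -
  assume B: "1 \<le> B"
  have "opD \<alpha> B (FF B v) = vz"
    by (auto simp: opD_def FF_def vz_def fun_eq_iff split: sum.split)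
  then show ?thesis by (simp add: rho_mult rho_gD rho_Om[OF B])
qed

lemma rho_OmU: "1 \<le> B \<Longrightarrow> rho \<alpha> B (Om \<alpha> * gU) v = vz"
proof -
  assume B: "1 \<le> B"
  have "FF B (opU B v) = vz"
    by (auto simp: opU_def FF_def vz_def fun_eq_iff split: sum.split)
  then show ?thesis by (simp add: rho_mult rho_gU rho_Om[OF B])
qed

lemma w1_vz: "w1 vz" by (simp add: w1_def vz_def)

lemma rho_rel: "1 \<le> B \<Longrightarrow> s \<in> downup_rels \<alpha> 0 1 \<Longrightarrow> rho \<alpha> B (toR s) v = vz"
  by (auto simp: rels_eq rho_DOm rho_OmU)

lemma toR_add: "a \<in> fa_carrier \<Longrightarrow> b \<in> fa_carrier \<Longrightarrow> toR (fa_add a b) = toR a + toR b"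
proof -
  assume "a \<in> fa_carrier" "b \<in> fa_carrier"
  then have "fa_add a b = toF (toR a + toR b)" by (simp add: toF_add toF_toR)
  then show ?thesis by simp
qed

lemma toR_mult3: "x \<in> fa_carrier \<Longrightarrow> a \<in> fa_carrier \<Longrightarrow> y \<in> fa_carrier \<Longrightarrow>
   toR (fa_mult x (fa_mult a y)) = toR x * (toR a * toR y)"
proof -
  assume "x \<in> fa_carrier" "a \<in> fa_carrier" "y \<in> fa_carrier"
  then have "fa_mult x (fa_mult a y) = toF (toR x * (toR a * toR y))" by (simp add: toF_mult toF_toR)
  then show ?thesis by simp
qed

lemma toR_mult: "a \<in> fa_carrier \<Longrightarrow> b \<in> fa_carrier \<Longrightarrow> toR (fa_mult a b) = toR a * toR b"
proof -
  assume "a \<in> fa_carrier" "b \<in> fa_carrier"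
  then have "fa_mult a b = toF (toR a * toR b)" by (simp add: toF_mult toF_toR)
  then show ?thesis by simp
qed

lemma toR_zero: "toR fa_zero = (0::'k::comm_ring_1 R)"
  by (simp only: toF_zero[symmetric] toR_toF)

lemma I_PP:
  assumes B: "1 \<le> B"
  shows "f \<in> omega_ideal \<alpha> \<Longrightarrow> PP (rho \<alpha> B (toR f))"
  unfolding omega_ideal_def
proof (induction rule: two_sided_ideal.induct)
  case (gen s)
  show ?case
  proof (cases "s \<in> downup_rels \<alpha> 0 1")
    case True then show ?thesis using rho_rel[OF B True] by (simp add: PP_def w1_vz)
  next
    case False
    then have "s = dua_omega \<alpha>" using gen by simp
    then have "rho \<alpha> B (toR s) = FF B" by (simp add: toR_Om) (rule ext, rule rho_Om[OF B])
    then show ?thesis by (simp add: PP_FF)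
  qed
next
  case zero
  show ?case by (simp add: toR_zero rho_0 PP_def w1_vz)
next
  case (add a b)
  then have "toR (fa_add a b) = toR a + toR b" by (simp add: toR_add tsi_carrier)
  then show ?case using add.IH
    by (simp add: rho_add PP_def w1_def vadd_def vz_def fun_eq_iff)
next
  case (mult a x y)
  then have e: "toR (fa_mult x (fa_mult a y)) = toR x * (toR a * toR y)" by (simp add: toR_mult3 tsi_carrier)
  have "lin (rho \<alpha> B (toR x))" by (rule lin_rho)
  then have z: "rho \<alpha> B (toR x) vz = vz" by (rule lin_zero)
  show ?case using mult.IH PQ_rho[of \<alpha> B "toR x"] PQ_rho[of \<alpha> B "toR y"] z
    unfolding e PP_def PQ_def by (simp add: rho_mult)
qed

lemma J_vz:
  assumes B: "1 \<le> B"
  shows "f \<in> omega_sq \<alpha> \<Longrightarrow> \<forall>v. rho \<alpha> B (toR f) v = vz"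
  unfolding omega_sq_def
proof (induction rule: two_sided_ideal.induct)
  case (gen s)
  show ?case
  proof (cases "s \<in> downup_rels \<alpha> 0 1")
    case True then show ?thesis using rho_rel[OF B True] by simp
  next
    case False
    then obtain a b where ab: "s = fa_mult a b" "a \<in> omega_ideal \<alpha>" "b \<in> omega_ideal \<alpha>" using gen by blast
    have ca: "a \<in> fa_carrier" "b \<in> fa_carrier"
      using ab(2,3) tsi_carrier unfolding omega_ideal_def by blast+
    have "PP (rho \<alpha> B (toR a))" "PP (rho \<alpha> B (toR b))" using I_PP[OF B] ab by blast+
    then show ?thesis using ab(1) ca by (simp add: toR_mult rho_mult PP_def)
  qed
next
  case zero
  show ?case by (simp add: toR_zero rho_0)
next
  case (add a b)
  then have "toR (fa_add a b) = toR a + toR b" by (simp add: toR_add tsi_carrier)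
  then show ?case using add.IH by (simp add: rho_add vadd_def vz_def)
next
  case (mult a x y)
  then have e: "toR (fa_mult x (fa_mult a y)) = toR x * (toR a * toR y)" by (simp add: toR_mult3 tsi_carrier)
  have "lin (rho \<alpha> B (toR x))" by (rule lin_rho)
  then have z: "rho \<alpha> B (toR x) vz = vz" by (rule lin_zero)
  show ?case using mult.IH z unfolding e by (simp add: rho_mult)
qed

definition ev :: "nat + nat \<times> nat \<Rightarrow> 'k::comm_ring_1 vec" where
  "ev k0 = (\<lambda>k. if k = k0 then 1 else 0)"

lemma opD_ev: "opD \<alpha> B (ev (Inr (0, b))) = ev (Inr (0, Suc b))"
  by (auto simp: opD_def ev_def fun_eq_iff split: sum.split)
lemma FF_ev: "FF B (ev (Inr (0, c))) = (if c = B then ev (Inl 0) else vz)"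
  by (auto simp: FF_def ev_def vz_def fun_eq_iff split: sum.split)
lemma opU_ev: "opU B (ev (Inl i)) = ev (Inl (Suc i))"
  by (auto simp: opU_def ev_def fun_eq_iff split: sum.split)
lemma opU_vz: "opU B vz = vz"
  by (auto simp: opU_def vz_def fun_eq_iff split: sum.split)

lemma rho_powD: "rho \<alpha> B (gD ^ l) v = (opD \<alpha> B ^^ l) v"
  by (induction l arbitrary: v) (simp_all add: rho_one rho_mult rho_gD)
lemma rho_powU: "rho \<alpha> B (gU ^ l) v = (opU B ^^ l) v"
  by (induction l arbitrary: v) (simp_all add: rho_one rho_mult rho_gU)
lemma powD_ev: "(opD \<alpha> B ^^ l) (ev (Inr (0, m))) = ev (Inr (0, m + l))"
  by (induction l) (simp_all add: opD_ev)
lemma powU_ev: "(opU B ^^ i) (ev (Inl 0)) = ev (Inl i)"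
  by (induction i) (simp_all add: opU_ev)
lemma powU_vz: "(opU B ^^ i) vz = vz"
  by (induction i) (simp_all add: opU_vz)

lemma rho_E_ev:
  assumes B: "1 \<le> B"
  shows "rho \<alpha> B (E \<alpha> i l) (ev (Inr (0, m))) (Inl i0) = (if m + l = B \<and> i = i0 then 1 else 0)"
  by (simp add: E_def rho_mult rho_powD rho_powU rho_Om[OF B] powD_ev FF_ev powU_ev powU_vz)
     (auto simp: ev_def vz_def)

lemma rho_sum: "rho \<alpha> B (\<Sum>x\<in>A. f x) v = (\<lambda>k. \<Sum>x\<in>A. rho \<alpha> B (f x) v k)"
  by (induction A rule: infinite_finite_induct) (simp_all add: rho_0 vz_def rho_add vadd_def)

lemma part2:
  fixes \<alpha> :: "'k::comm_ring_1"
  shows "\<forall>(S::(nat \<times> nat) set) c. finite S \<and>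
            fa_sum S (\<lambda>x. fa_smult (c x) (omega_basis \<alpha> (fst x) (snd x))) \<in> omega_sq \<alpha>
              \<longrightarrow> (\<forall>x\<in>S. c x = 0)"
proof (intro allI impI ballI, elim conjE)
  fix S :: "(nat \<times> nat) set" and c x
  assume fin: "finite S" and mem: "fa_sum S (\<lambda>x. fa_smult (c x) (omega_basis \<alpha> (fst x) (snd x))) \<in> omega_sq \<alpha>"
    and x: "x \<in> S"
  obtain i0 l0 where x0: "x = (i0, l0)" by (cases x)
  define B where "B = Suc (Max (snd ` S))"
  have B1: "1 \<le> B" by (simp add: B_def)
  have lt: "l < B" if "(i, l) \<in> S" for i l
  proof -
    have "l \<in> snd ` S" using that by (rule rev_image_eqI) simp
    then have "l \<le> Max (snd ` S)" using fin by simp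
    then show ?thesis by (simp add: B_def)
  qed
  have l0B: "l0 < B" using lt x x0 by blast
  have "toR (fa_sum S (\<lambda>x. fa_smult (c x) (omega_basis \<alpha> (fst x) (snd x)))) = comb \<alpha> S c"
    by (simp only: toF_comb[symmetric] toR_toF)
  then have z: "rho \<alpha> B (comb \<alpha> S c) v = vz" for v using J_vz[OF B1 mem] by simp
  define m where "m = B - l0"
  have "0 = rho \<alpha> B (comb \<alpha> S c) (ev (Inr (0, m))) (Inl i0)" using z by (simp add: vz_def)
  also have "\<dots> = (\<Sum>y\<in>S. c y * (if m + snd y = B \<and> fst y = i0 then 1 else 0))"
    by (simp add: comb_def rho_sum rho_sc vsc_def rho_E_ev[OF B1])
  also have "\<dots> = (\<Sum>y\<in>S. if y = x then c y else 0)"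
  proof (rule sum.cong)
    fix y assume y: "y \<in> S"
    obtain i l where yy: "y = (i, l)" by (cases y)
    have "l < B" using lt y yy by blast
    then have "(m + l = B) = (l = l0)" using l0B by (auto simp: m_def)
    then show "c y * (if m + snd y = B \<and> fst y = i0 then 1 else 0) = (if y = x then c y else 0)"
      using yy x0 by auto
  qed simp
  also have "\<dots> = c x" using x fin by simp
  finally show "c x = 0" by simp
qed


theorem corollary2p6:
  fixes \<alpha> :: "'k::field_char_0"
  shows "(\<forall>p \<in> omega_ideal \<alpha>. \<exists>(S::(nat \<times> nat) set) c. finite S \<and>
            fa_sub p (fa_sum S (\<lambda>x. fa_smult (c x) (omega_basis \<alpha> (fst x) (snd x))))
              \<in> omega_sq \<alpha>)
       \<and> (\<forall>(S::(nat \<times> nat) set) c. finite S \<and>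
            fa_sum S (\<lambda>x. fa_smult (c x) (omega_basis \<alpha> (fst x) (snd x))) \<in> omega_sq \<alpha>
              \<longrightarrow> (\<forall>x\<in>S. c x = 0))
       \<and> (\<alpha> \<noteq> 1 \<longrightarrow> (\<forall>i l.
            fa_sub (fa_mult (omega_basis \<alpha> i l) gen_u)
                   (fa_smult ((\<alpha> ^ l - 1) / (\<alpha> - 1)) (omega_basis \<alpha> i (l - 1))) \<in> omega_sq \<alpha>
          \<and> fa_sub (fa_mult gen_d (omega_basis \<alpha> i l))
                   (fa_smult ((\<alpha> ^ i - 1) / (\<alpha> - 1)) (omega_basis \<alpha> (i - 1) l)) \<in> omega_sq \<alpha>))"
  by (intro conjI part1 part2 part3)

end
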